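(* Let $\mathcal H_s\cong\mathbb C^d$, $\mathcal H_u\cong\mathbb C^k$, let $\chi\in\mathcal H_u$ be a unit vector and $U$ a unitary on $\mathcal H_s\otimes\mathcal H_u$ such that the transition operator $T(\rho)=\mathrm{Tr}_u\big(U(\rho\otimes|\chi\rangle\langle\chi|)U^*\big)$ is primitive, with stationary state $\rho_{ss}$. Let $\mathcal H_a\cong\mathbb C^d$ be an additional (absorber) system. Then there exist a unit vector $\tilde\psi\in\mathcal H_s\otimes\mathcal H_a$ with $\mathrm{Tr}_a|\tilde\psi\rangle\langle\tilde\psi|=\rho_{ss}$ and a unitary $V$ on $\mathcal H_a\otimes\mathcal H_u$ such that, with $W:=(\mathbf 1_s\otimes V)(U\otimes\mathbf 1_a)$ acting on $\mathcal H_s\otimes\mathcal H_a\otimes\mathcal H_u$ (with the obvious reordering of tensor factors), $$W(\tilde\psi\otimes\chi)=\tilde\psi\otimes\chi .$$ In particular, if the doubled-up system $\mathcal H_s\otimes\mathcal H_a$ starts in $\tilde\psi$ and interacts successively via $W$ with $n$ noise units each prepared in $\chi$, the joint final state is $\tilde\psi\otimes\chi^{\otimes n}$, so the output state of the $n$ noise units equals the input state $\chi^{\otimes n}$.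
   Context: A quantum Markov chain (discrete-time input-output system) consists of a system $\mathcal H_s$ interacting successively via a fixed unitary $U$ on $\mathcal H_s\otimes\mathcal H_u$ with independent noise units, each prepared in state $\chi$. Primitive means $T$ has a unique full-rank stationary state $\rho_{ss}$ ($T(\rho_{ss})=\rho_{ss}$) and $1$ is the only eigenvalue of $T$ on the unit circle. *)

theory Defs
  imports "HOL-Analysis.Analysis"
begin

text \<open>Finite-dimensional Hilbert spaces C^n are modelled as complex ^ 'n for a finite
index type 'n; operators as complex ^ 'n ^ 'n (row index first).  Tensor products
are indexed by product types.\<close>

definition adj :: "complex^'n^'m \<Rightarrow> complex^'m^'n" where
  "adj A = (\<chi> i j. cnj (A $ j $ i))"

definition unitary :: "complex^'n^'n \<Rightarrow> bool" where
  "unitary U \<longleftrightarrow> U ** adj U = mat 1 \<and> adj U ** U = mat 1"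

definition smult_mat :: "complex \<Rightarrow> complex^'n^'m \<Rightarrow> complex^'n^'m" where
  "smult_mat c X = (\<chi> i j. c * X $ i $ j)"

definition mtrace :: "complex^'n^'n \<Rightarrow> complex" where
  "mtrace X = (\<Sum>i\<in>UNIV. X $ i $ i)"

definition psd :: "complex^'n^'n \<Rightarrow> bool" where
  "psd X \<longleftrightarrow> (\<forall>v::complex^'n.
      Im (\<Sum>i\<in>UNIV. cnj (v $ i) * (X *v v) $ i) = 0 \<and>
      0 \<le> Re (\<Sum>i\<in>UNIV. cnj (v $ i) * (X *v v) $ i))"

definition density_op :: "complex^'n^'n \<Rightarrow> bool" where
  "density_op \<rho> \<longleftrightarrow> psd \<rho> \<and> mtrace \<rho> = 1"

definition proj :: "complex^'n \<Rightarrow> complex^'n^'n" where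
  "proj \<psi> = (\<chi> i j. \<psi> $ i * cnj (\<psi> $ j))"

definition kron :: "complex^'a^'a \<Rightarrow> complex^'b^'b \<Rightarrow> complex^('a\<times>'b)^('a\<times>'b)" where
  "kron A B = (\<chi> p q. A $ fst p $ fst q * B $ snd p $ snd q)"

definition vtensor :: "complex^'a \<Rightarrow> complex^'b \<Rightarrow> complex^('a\<times>'b)" where
  "vtensor x y = (\<chi> p. x $ fst p * y $ snd p)"

definition ptrace2 :: "complex^('a::finite\<times>'b::finite)^('a\<times>'b) \<Rightarrow> complex^'a^'a" where
  "ptrace2 X = (\<chi> i j. \<Sum>k\<in>UNIV. X $ (i,k) $ (j,k))"

definition transop :: "complex^('s\<times>'u)^('s\<times>'u) \<Rightarrow> complex^'u \<Rightarrow> complex^'s^'s \<Rightarrow> complex^'s^'s" where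
  "transop U chi \<rho> = ptrace2 (U ** kron \<rho> (proj chi) ** adj U)"

definition primitive :: "(complex^'s^'s \<Rightarrow> complex^'s^'s) \<Rightarrow> bool" where
  "primitive T \<longleftrightarrow>
     (\<exists>!\<rho>. density_op \<rho> \<and> T \<rho> = \<rho>) \<and>
     (\<forall>\<rho>. density_op \<rho> \<and> T \<rho> = \<rho> \<longrightarrow> invertible \<rho>) \<and>
     (\<forall>c X. X \<noteq> 0 \<and> T X = smult_mat c X \<and> cmod c = 1 \<longrightarrow> c = 1)"

text \<open>U (x) 1_a and 1_s (x) V as operators on (H_s (x) H_a) (x) H_u.\<close>
definition U_ext :: "complex^('s::finite\<times>'u::finite)^('s\<times>'u) \<Rightarrow> complex^(('s\<times>'a)\<times>'u)^(('s\<times>'a::finite)\<times>'u)" where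
  "U_ext U = (\<chi> p q. U $ (fst (fst p), snd p) $ (fst (fst q), snd q) * (if snd (fst p) = snd (fst q) then 1 else 0))"

definition V_ext :: "complex^('a::finite\<times>'u::finite)^('a\<times>'u) \<Rightarrow> complex^(('s\<times>'a)\<times>'u)^(('s::finite\<times>'a)\<times>'u)" where
  "V_ext V = (\<chi> p q. (if fst (fst p) = fst (fst q) then 1 else 0) * V $ (snd (fst p), snd p) $ (snd (fst q), snd q))"

end

theory Submission
  imports Defs
begin


definition cin :: "complex^'n \<Rightarrow> complex^'n \<Rightarrow> complex" where
  "cin x y = (\<Sum>i\<in>UNIV. cnj (x$i) * y$i)"

lemma cin_add_right: "cin x (y + z) = cin x y + cin x z"
  by (simp add: cin_def distrib_left sum.distrib)
lemma cin_diff_right: "cin x (y - z) = cin x y - cin x z"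
  by (simp add: cin_def right_diff_distrib sum_subtractf)
lemma cin_diff_left: "cin (x - y) z = cin x z - cin y z"
  by (simp add: cin_def left_diff_distrib sum_subtractf)
lemma cin_add_left: "cin (x + y) z = cin x z + cin y z"
  by (simp add: cin_def distrib_right sum.distrib)
lemma cin_scale_right: "cin x (c *s y) = c * cin x y"
  by (simp add: cin_def sum_distrib_left mult_ac)
lemma cin_scale_left: "cin (c *s x) y = cnj c * cin x y"
  by (simp add: cin_def sum_distrib_left mult_ac)
lemma cin_cnj: "cnj (cin x y) = cin y x"
  by (simp add: cin_def mult_ac)
lemma cin_zero_left[simp]: "cin 0 y = 0" by (simp add: cin_def)
lemma cin_zero_right[simp]: "cin x 0 = 0" by (simp add: cin_def)

lemma cin_self: "cin w w = of_real ((norm w)^2)"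
proof -
  have "(norm w)^2 = (\<Sum>i\<in>UNIV. (cmod (w$i))^2)"
    by (simp add: norm_vec_def L2_set_def sum_nonneg)
  hence "of_real ((norm w)^2) = (\<Sum>i\<in>UNIV. complex_of_real ((cmod (w$i))^2))" by simp
  also have "\<dots> = cin w w" unfolding cin_def complex_norm_square by (simp add: mult_ac)
  finally show ?thesis by simp
qed

lemma cin_self_eq0: "cin w w = 0 \<Longrightarrow> w = 0"
  by (simp add: cin_self)

lemma adj_adj[simp]: "adj (adj A) = A"
  by (simp add: adj_def vec_eq_iff)

lemma cin_adj: "cin x (A *v y) = cin (adj A *v x) y"
  unfolding cin_def adj_def matrix_vector_mult_def
  by (simp add: sum_distrib_left sum_distrib_right mult_ac; rule sum.swap)

lemma adj_mult: "adj (A ** B) = adj B ** adj A"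
  by (simp add: adj_def matrix_matrix_mult_def vec_eq_iff mult_ac)

lemma unitary_mult: assumes "unitary A" "unitary B" shows "unitary (A ** B)"
proof -
  have "A ** B ** adj (A ** B) = A ** (B ** adj B) ** adj A"
    by (simp add: adj_mult matrix_mul_assoc)
  moreover have "adj (A ** B) ** (A ** B) = adj B ** (adj A ** A) ** B"
    by (simp add: adj_mult matrix_mul_assoc)
  ultimately show ?thesis using assms by (simp add: unitary_def)
qed

lemma cin_unitary: assumes "unitary M" shows "cin (M *v x) (M *v y) = cin x y"
  using assms by (simp add: cin_adj matrix_vector_mul_assoc unitary_def)

lemma adj_mat1[simp]: "adj (mat 1) = (mat 1 :: complex^'n^'n)"
  by (simp add: adj_def mat_def vec_eq_iff)

lemma unitary_id[simp]: "unitary (mat 1)"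
  by (simp add: unitary_def)

definition R :: "complex \<Rightarrow> complex^'n \<Rightarrow> complex^'n^'n" where
  "R c w = (\<chi> i j. (if i = j then 1 else 0) - c * w$i * cnj (w$j))"

lemma R_mulv: "R c w *v v = v - (c * cin w v) *s w"
proof -
  have "(R c w *v v) $ i = (v - (c * cin w v) *s w) $ i" for i
  proof -
    have "(R c w *v v) $ i = (\<Sum>j\<in>UNIV. (if i = j then v$j else 0) - c * w$i * cnj (w$j) * v$j)"
      unfolding R_def matrix_vector_mult_def by (simp, intro sum.cong refl) (simp add: algebra_simps)
    also have "\<dots> = v$i - (\<Sum>j\<in>UNIV. c * w$i * cnj (w$j) * v$j)"
      by (simp add: sum_subtractf)
    also have "\<dots> = (v - (c * cin w v) *s w) $ i"
      by (simp add: cin_def sum_distrib_left mult_ac)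
    finally show ?thesis .
  qed
  thus ?thesis by (simp add: vec_eq_iff)
qed

lemma adj_R: "adj (R c w) = R (cnj c) w"
  by (simp add: R_def adj_def vec_eq_iff mult_ac)

lemma R_R: assumes "c + d = c * d * cin w w" shows "R d w ** R c w = mat 1"
proof -
  have "R d w *v (R c w *v v) = v" for v
  proof -
    have "R d w *v (R c w *v v) = v - (c * cin w v + d * (cin w v - c * cin w v * cin w w)) *s w"
      by (simp add: R_mulv cin_diff_right cin_scale_right algebra_simps)
    also have "c * cin w v + d * (cin w v - c * cin w v * cin w w) = cin w v * (c + d - c * d * cin w w)"
      by (simp add: algebra_simps)
    finally show ?thesis using assms by simp
  qed
  thus ?thesis by (simp add: matrix_eq matrix_vector_mul_assoc[symmetric])
qed

lemma unitary_R: assumes "c + cnj c = c * cnj c * cin w w" shows "unitary (R c w)"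
  unfolding unitary_def adj_R
  using R_R[of c "cnj c" w] R_R[of "cnj c" c w] assms by (simp add: mult_ac add_ac)

lemma ext_step:
  fixes x y :: "complex^'n"
  assumes "cin x x = cin y y"
  shows "\<exists>N. unitary N \<and> N *v x = y \<and> (\<forall>z. cin (x - y) z = 0 \<longrightarrow> N *v z = z)"
proof -
  define w where "w = x - y"
  define s where "s = cin w x"
  have cs: "cnj s = cin x w" using cin_cnj[of w x] by (simp add: s_def)
  have ww: "cin w w = s + cnj s"
    using assms unfolding cs s_def w_def
    by (simp add: cin_diff_left cin_diff_right cin_cnj[of y x, symmetric] cin_cnj[of y y])
  show ?thesis
  proof (cases "s = 0")
    case True
    hence "cin w w = 0" using ww by simp
    hence "w = 0" by (rule cin_self_eq0)
    hence "x = y" by (simp add: w_def)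
    thus ?thesis by (intro exI[of _ "mat 1"]) simp
  next
    case False
    have cs0: "cnj s \<noteq> 0" using False by simp
    have u: "unitary (R (1/s) w)"
      by (rule unitary_R) (use False cs0 ww in \<open>simp add: field_simps\<close>)
    have "R (1/s) w *v x = y" proof -
      have "R (1/s) w *v x = x - (s / s) *s w" by (simp add: R_mulv s_def)
      thus ?thesis using False by (simp add: w_def)
    qed
    moreover have "cin (x - y) z = 0 \<Longrightarrow> R (1/s) w *v z = z" for z
      by (simp add: R_mulv w_def)
    ultimately show ?thesis using u by blast
  qed
qed

lemma ext_fam:
  fixes \<phi> c :: "'i::finite \<Rightarrow> complex^'m"
  assumes "\<And>i j. cin (\<phi> i) (\<phi> j) = cin (c i) (c j)"
  shows "\<exists>M. unitary M \<and> (\<forall>i. M *v \<phi> i = c i)"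
proof -
  have "finite F \<Longrightarrow> \<exists>M. unitary M \<and> (\<forall>i\<in>F. M *v \<phi> i = c i)" for F :: "'i set"
  proof (induction F rule: finite_induct)
    case empty
    show ?case by (intro exI[of _ "mat 1"]) simp
  next
    case (insert i0 F)
    then obtain M where M: "unitary M" "\<forall>i\<in>F. M *v \<phi> i = c i" by blast
    define x where "x = M *v \<phi> i0"
    have "cin x x = cin (c i0) (c i0)" using cin_unitary[OF M(1)] assms by (simp add: x_def)
    then obtain N where N: "unitary N" "N *v x = c i0" "\<forall>z. cin (x - c i0) z = 0 \<longrightarrow> N *v z = z"
      using ext_step by blast
    have "\<forall>i\<in>insert i0 F. (N ** M) *v \<phi> i = c i"
    proof
      fix i assume i: "i \<in> insert i0 F"
      show "(N ** M) *v \<phi> i = c i"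
      proof (cases "i = i0")
        case True thus ?thesis using N by (simp add: matrix_vector_mul_assoc[symmetric] x_def)
      next
        case False
        hence iF: "i \<in> F" using i by simp
        have "cin (x - c i0) (c i) = 0"
          using cin_unitary[OF M(1), of "\<phi> i0" "\<phi> i"] assms[of i0 i] M(2) iF
          by (simp add: cin_diff_left x_def)
        thus ?thesis using N M(2) iF by (simp add: matrix_vector_mul_assoc[symmetric])
      qed
    qed
    thus ?case using unitary_mult[OF N(1) M(1)] by blast
  qed
  from this[of UNIV] show ?thesis by simp
qed



definition ev :: "'n \<Rightarrow> complex^'n" where "ev i = (\<chi> k. if k = i then 1 else 0)"

lemma cin_ev_left[simp]: "cin (ev i) x = x $ i"
proof -
  have "cin (ev i) x = (\<Sum>k\<in>UNIV. if k = i then x $ k else 0)"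
    unfolding cin_def ev_def by (rule sum.cong) auto
  thus ?thesis by simp
qed

lemma mulv_ev[simp]: "(M *v ev j) $ i = M $ i $ j"
  by (simp add: matrix_vector_mult_def ev_def if_distrib cong: if_cong)

lemma mulv_scale: "(A::complex^'n^'m) *v (c *s x) = c *s (A *v x)"
  by (simp add: matrix_vector_mult_def vec_eq_iff sum_distrib_left mult_ac)

lemma psd_iff: "psd M \<longleftrightarrow> (\<forall>v. Im (cin v (M *v v)) = 0 \<and> 0 \<le> Re (cin v (M *v v)))"
  by (simp add: psd_def cin_def)

lemma polar_zero:
  fixes B :: "complex^'n^'n"
  assumes "\<And>v. cin v (B *v v) = 0"
  shows "B = 0"
proof -
  have sum0: "cin x (B *v y) + cin y (B *v x) = 0" for x y
  proof -
    have "cin (x+y) (B *v (x+y)) = cin x (B*v x) + (cin x (B*v y) + cin y (B*v x)) + cin y (B*v y)"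
      by (simp add: cin_add_left cin_add_right matrix_vector_right_distrib algebra_simps)
    thus ?thesis using assms[of "x + y"] assms[of x] assms[of y] by simp
  qed
  have "cin x (B *v y) = 0" for x y
  proof -
    have "cin (\<i> *s x) (B *v y) + cin y (B *v (\<i> *s x)) = 0" by (rule sum0)
    hence "- \<i> * cin x (B *v y) + \<i> * cin y (B *v x) = 0"
      by (simp add: cin_scale_left cin_scale_right mulv_scale)
    hence "cin y (B *v x) = cin x (B *v y)"
      by (simp add: algebra_simps)
    thus ?thesis using sum0[of x y] by simp
  qed
  hence "B *v y = 0" for y using cin_self_eq0 by blast
  thus ?thesis by (simp add: matrix_eq)
qed

lemma psd_herm: assumes "psd M" shows "adj M = M"
proof -
  have "cin v ((M - adj M) *v v) = 0" for v
  proof -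
    have "Im (cin v (M *v v)) = 0" using assms psd_iff by blast
    hence "cnj (cin v (M *v v)) = cin v (M *v v)"
      by (simp add: complex_eq_iff)
    moreover have "cnj (cin v (M *v v)) = cin v (adj M *v v)"
      using cin_adj[of v "adj M" v] by (simp add: cin_cnj)
    ultimately show ?thesis by (simp add: matrix_vector_mult_diff_rdistrib cin_diff_right)
  qed
  hence "M - adj M = 0" by (rule polar_zero)
  thus ?thesis by simp
qed

lemma real_quad:
  fixes Q A r :: real
  assumes "\<And>s. 0 \<le> Q - 2 * s * A + s^2 * A * r" "A \<ge> 0" "r \<ge> 0"
  shows "A \<le> r * Q"
proof -
  have Q: "Q \<ge> 0" using assms(1)[of 0] by simp
  show ?thesis
  proof (cases "A = 0")
    case True thus ?thesis using Q assms by simp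
  next
    case A: False
    show ?thesis
    proof (cases "r = 0")
      case True
      have "0 \<le> Q - 2 * ((Q+1)/(2*A)) * A" using assms(1)[of "(Q+1)/(2*A)"] True by simp
      also have "\<dots> = -1" using A by (simp add: field_simps)
      finally show ?thesis by simp
    next
      case False
      hence r: "r > 0" using assms by simp
      have "0 \<le> Q - 2 * (1/r) * A + (1/r)^2 * A * r" by (rule assms(1))
      also have "\<dots> = Q - A / r" using r by (simp add: field_simps power2_eq_square)
      finally show ?thesis using r by (simp add: field_simps)
    qed
  qed
qed

lemma psd_cs:
  assumes "psd M"
  shows "(cmod ((M *v v) $ i))^2 \<le> Re (M $ i $ i) * Re (cin v (M *v v))"
proof -
  have h: "adj M = M" using psd_herm[OF assms] .
  define a where "a = (M *v v) $ i"
  define r where "r = Re (M $ i $ i)"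
  have Mii: "M $ i $ i = of_real r"
    using psd_iff[THEN iffD1, OF assms, rule_format, of "ev i"]
    by (simp add: r_def complex_eq_iff)
  have r0: "r \<ge> 0"
    using psd_iff[THEN iffD1, OF assms, rule_format, of "ev i"] by (simp add: r_def)
  have cva: "cin v (M *v ev i) = cnj a"
  proof -
    have "cin v (M *v ev i) = cin (M *v v) (ev i)" using cin_adj[of v M "ev i"] h by simp
    also have "\<dots> = cnj (cin (ev i) (M *v v))" by (metis cin_cnj)
    finally show ?thesis by (simp add: a_def)
  qed
  have "0 \<le> Re (cin v (M *v v)) - 2 * s * (cmod a)^2 + s^2 * (cmod a)^2 * r" for s :: real
  proof -
    define t where "t = of_real s * a"
    have "cin (v - t *s ev i) (M *v (v - t *s ev i)) =
          cin v (M *v v) - t * cnj a - cnj t * a + cnj t * t * of_real r"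
      by (simp add: matrix_vector_mult_diff_distrib mulv_scale cin_diff_left cin_diff_right
          cin_scale_left cin_scale_right cva Mii a_def[symmetric] algebra_simps)
    also have "\<dots> = cin v (M *v v) - (2 * of_real s * (a * cnj a) - (of_real s)^2 * (a * cnj a) * of_real r)"
      by (simp add: t_def power2_eq_square algebra_simps)
    also have "\<dots> = cin v (M *v v) - of_real (2 * s * (cmod a)^2 - s^2 * (cmod a)^2 * r)"
      by (simp add: complex_norm_square[symmetric])
    finally have "Re (cin (v - t *s ev i) (M *v (v - t *s ev i))) =
       Re (cin v (M *v v)) - (2 * s * (cmod a)^2 - s^2 * (cmod a)^2 * r)" by simp
    moreover have "0 \<le> Re (cin (v - t *s ev i) (M *v (v - t *s ev i)))"
      using psd_iff assms by blast
    ultimately show ?thesis by simp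
  qed
  from real_quad[OF this] r0 show ?thesis by (simp add: a_def r_def mult_ac)
qed



lemma proj_mulv: "proj c *v v = cin c v *s c"
  by (simp add: proj_def matrix_vector_mult_def cin_def vec_eq_iff sum_distrib_left mult_ac)

lemma chol_aux:
  fixes M :: "complex^'n^'n"
  assumes "finite F"
  shows "psd M \<Longrightarrow> (\<forall>i j. i \<notin> F \<or> j \<notin> F \<longrightarrow> M$i$j = 0) \<Longrightarrow>
         \<exists>A. A ** adj A = M \<and> (\<forall>i k. k \<notin> F \<longrightarrow> A$i$k = 0)"
  using assms
proof (induction F arbitrary: M rule: finite_induct)
  case empty
  hence "M = 0" by (simp add: vec_eq_iff)
  thus ?case by (intro exI[of _ 0]) simp
next
  case (insert i0 F M)
  have psdM: "psd M" by fact
  have supp: "\<And>i j. i \<notin> insert i0 F \<or> j \<notin> insert i0 F \<Longrightarrow> M$i$j = 0" using insert by blast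
  have h: "adj M = M" using psd_herm[OF psdM] .
  have hM: "M $ j $ i = cnj (M $ i $ j)" for i j
    using arg_cong[OF h, of "\<lambda>X. X $ j $ i"] by (simp add: adj_def)
  define r where "r = Re (M $ i0 $ i0)"
  have Mii: "M $ i0 $ i0 = of_real r"
    using psd_iff[THEN iffD1, OF psdM, rule_format, of "ev i0"]
    by (simp add: r_def complex_eq_iff)
  have r0: "r \<ge> 0"
    using psd_iff[THEN iffD1, OF psdM, rule_format, of "ev i0"] by (simp add: r_def)
  define c where "c = (1 / of_real (sqrt r)) *s (M *v ev i0)"
  have cc: "c $ i * cnj (c $ j) = M $ i $ i0 * M $ i0 $ j / of_real r" for i j
  proof -
    have "c $ i * cnj (c $ j) = M $ i $ i0 * cnj (M $ j $ i0) / (of_real (sqrt r) * of_real (sqrt r))"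
      by (simp add: c_def)
    also have "of_real (sqrt r) * of_real (sqrt r) = (of_real r :: complex)"
    proof -
      have "sqrt r * sqrt r = r" using r0 by simp
      thus ?thesis by (metis of_real_mult)
    qed
    finally show ?thesis using hM[of i0 j] by simp
  qed
  define M' where "M' = M - proj c"
  have M'e: "M' $ i $ j = M $ i $ j - M $ i $ i0 * M $ i0 $ j / of_real r" for i j
    by (simp add: M'_def proj_def cc)
  have cin_c: "cin c v = (M *v v) $ i0 / of_real (sqrt r)" for v
  proof -
    have "cin (M *v ev i0) v = (M *v v) $ i0"
      using cin_adj[of "ev i0" "adj M" v] h by (metis cin_cnj cin_ev_left adj_adj)
    thus ?thesis by (simp add: c_def cin_scale_left)
  qed
  have psdM': "psd M'"
    unfolding psd_iff
  proof
    fix v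
    define a where "a = (M *v v) $ i0"
    have "cin v (M' *v v) = cin v (M *v v) - cin c v * cnj (cin c v)"
      by (simp add: M'_def matrix_vector_mult_diff_rdistrib cin_diff_right proj_mulv
          cin_scale_right cin_cnj mult_ac)
    also have "\<dots> = cin v (M *v v) - of_real ((cmod a)^2 / r)"
    proof -
      have "cin c v * cnj (cin c v) = of_real ((cmod (cin c v))^2)" by (rule complex_norm_square[symmetric])
      also have "(cmod (cin c v))^2 = (cmod a)^2 / r"
        using r0 by (simp add: cin_c a_def norm_divide power_divide)
      finally show ?thesis by simp
    qed
    finally have eq: "cin v (M' *v v) = cin v (M *v v) - of_real ((cmod a)^2 / r)" .
    have cs: "(cmod a)^2 \<le> r * Re (cin v (M *v v))"
      using psd_cs[OF psdM, of v i0] by (simp add: a_def r_def)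
    have "(cmod a)^2 / r \<le> Re (cin v (M *v v))"
    proof (cases "r = 0")
      case True thus ?thesis using psdM psd_iff by auto
    next
      case False thus ?thesis using cs r0 by (simp add: field_simps)
    qed
    thus "Im (cin v (M' *v v)) = 0 \<and> 0 \<le> Re (cin v (M' *v v))"
      using eq psdM psd_iff by auto
  qed
  have row0: "r = 0 \<Longrightarrow> M $ i0 $ j = 0" for j
  proof -
    assume "r = 0"
    hence "(cmod ((M *v ev j) $ i0))^2 \<le> 0" using psd_cs[OF psdM, of "ev j" i0] by (simp add: r_def)
    thus ?thesis by simp
  qed
  have suppM': "\<forall>i j. i \<notin> F \<or> j \<notin> F \<longrightarrow> M'$i$j = 0"
  proof (intro allI impI)
    fix i j assume ij: "i \<notin> F \<or> j \<notin> F"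
    show "M' $ i $ j = 0"
    proof (cases "r = 0")
      case True
      have "M $ i $ j = 0"
        using ij supp row0[OF True] hM True by (metis complex_cnj_zero insert_iff)
      thus ?thesis by (simp add: M'e True)
    next
      case False
      hence rc: "(of_real r :: complex) \<noteq> 0" by simp
      show ?thesis
      proof (cases "i \<notin> insert i0 F \<or> j \<notin> insert i0 F")
        case True
        hence "M $ i $ j = 0" "M $ i $ i0 = 0 \<or> M $ i0 $ j = 0" using supp by auto
        thus ?thesis by (auto simp: M'e)
      next
        case False
        hence "i = i0 \<or> j = i0" using ij by auto
        thus ?thesis using rc by (auto simp: M'e Mii)
      qed
    qed
  qed
  obtain A' where A': "A' ** adj A' = M'" "\<forall>i k. k \<notin> F \<longrightarrow> A'$i$k = 0"
    using insert.IH[OF psdM' suppM'] by blast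
  define D where "D = (\<chi> i k. if k = i0 then c $ i else 0)"
  define A where "A = A' + D"
  have "A ** adj A = M"
  proof -
    have "(A ** adj A) $ i $ j = M $ i $ j" for i j
    proof -
      have tm: "(A' $ i $ k + D $ i $ k) * cnj (A' $ j $ k + D $ j $ k) =
            A' $ i $ k * cnj (A' $ j $ k) + (if k = i0 then c $ i * cnj (c $ j) else 0)" for k
        using A'(2) insert.hyps(2) by (auto simp: D_def algebra_simps)
      have "(A ** adj A) $ i $ j = (\<Sum>k\<in>UNIV. (A' $ i $ k + D $ i $ k) * cnj (A' $ j $ k + D $ j $ k))"
        by (simp add: A_def matrix_matrix_mult_def adj_def)
      also have "\<dots> = (\<Sum>k\<in>UNIV. A' $ i $ k * cnj (A' $ j $ k)) + c $ i * cnj (c $ j)"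
        by (simp only: tm sum.distrib) simp
      also have "(\<Sum>k\<in>UNIV. A' $ i $ k * cnj (A' $ j $ k)) = M' $ i $ j"
        using A'(1) by (simp add: matrix_matrix_mult_def adj_def vec_eq_iff)
      finally show ?thesis by (simp add: M'_def proj_def)
    qed
    thus ?thesis by (simp add: vec_eq_iff)
  qed
  moreover have "\<forall>i k. k \<notin> insert i0 F \<longrightarrow> A$i$k = 0"
    using A'(2) by (simp add: A_def D_def)
  ultimately show ?case by blast
qed

lemma purification:
  fixes M :: "complex^'n^'n"
  assumes "psd M"
  shows "\<exists>A::complex^'n^'n. A ** adj A = M"
  using chol_aux[of UNIV M] assms by simp



lemma sum_prod_UNIV: "(\<Sum>p\<in>(UNIV::('a::finite\<times>'b::finite) set). f p) = (\<Sum>x\<in>UNIV. \<Sum>y\<in>UNIV. f (x,y))"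
  by (simp only: sum.cartesian_product UNIV_Times_UNIV case_prod_eta)

lemma gram_lemma:
  fixes U :: "complex^('s::finite \<times> 'u::finite)^('s \<times> 'u)" and A :: "complex^'s^'s" and chi :: "complex^'u"
  defines "G \<equiv> \<lambda>i b w. (\<Sum>p\<in>UNIV. U $ (i,w) $ p * A $ fst p $ b * chi $ snd p)"
  shows "(\<Sum>b\<in>UNIV. \<Sum>w\<in>UNIV. cnj (G i b w) * G j b w) = transop U chi (A ** adj A) $ j $ i"
proof -
  define F where "F b w q p = cnj (U$(i,w)$q) * cnj (A$fst q$b) * cnj (chi$snd q) *
      (U$(j,w)$p * A$fst p$b * chi$snd p)" for b w q p
  have L2: "cnj (G i b w) * G j b w = (\<Sum>q\<in>UNIV. \<Sum>p\<in>UNIV. F b w q p)" for b w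
    unfolding G_def cnj_sum sum_product F_def by (intro sum.cong refl) (simp add: mult_ac)
  have L3: "(\<Sum>b\<in>UNIV. \<Sum>w\<in>UNIV. \<Sum>q\<in>UNIV. \<Sum>p\<in>UNIV. F b w q p) =
            (\<Sum>w\<in>UNIV. \<Sum>q\<in>UNIV. \<Sum>p\<in>UNIV. \<Sum>b\<in>UNIV. F b w q p)"
  proof -
    have "(\<Sum>b\<in>UNIV. \<Sum>w\<in>UNIV. \<Sum>q\<in>UNIV. \<Sum>p\<in>UNIV. F b w q p) =
          (\<Sum>w\<in>UNIV. \<Sum>b\<in>UNIV. \<Sum>q\<in>UNIV. \<Sum>p\<in>UNIV. F b w q p)" by (rule sum.swap)
    also have "\<dots> = (\<Sum>w\<in>UNIV. \<Sum>q\<in>UNIV. \<Sum>b\<in>UNIV. \<Sum>p\<in>UNIV. F b w q p)"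
      by (rule sum.cong[OF refl], rule sum.swap)
    also have "\<dots> = (\<Sum>w\<in>UNIV. \<Sum>q\<in>UNIV. \<Sum>p\<in>UNIV. \<Sum>b\<in>UNIV. F b w q p)"
      by (rule sum.cong[OF refl], rule sum.cong[OF refl], rule sum.swap)
    finally show ?thesis .
  qed
  have R: "(U ** kron (A ** adj A) (proj chi) ** adj U) $ (j,w) $ (i,w) =
           (\<Sum>q\<in>UNIV. \<Sum>p\<in>UNIV. \<Sum>b\<in>UNIV. F b w q p)" for w
  proof -
    have "(U ** kron (A ** adj A) (proj chi) ** adj U) $ (j,w) $ (i,w) =
      (\<Sum>q\<in>UNIV. (\<Sum>p\<in>UNIV. U $ (j,w) $ p * ((\<Sum>b\<in>UNIV. A $ fst p $ b * cnj (A $ fst q $ b)) *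
          (chi $ snd p * cnj (chi $ snd q)))) * cnj (U $ (i,w) $ q))"
      by (simp add: matrix_matrix_mult_def kron_def proj_def adj_def)
    also have "\<dots> = (\<Sum>q\<in>UNIV. \<Sum>p\<in>UNIV. \<Sum>b\<in>UNIV. F b w q p)"
      by (simp add: F_def sum_distrib_left sum_distrib_right mult_ac)
    finally show ?thesis .
  qed
  show ?thesis
    by (simp add: L2 L3 R transop_def ptrace2_def)
qed



lemma delta2:
  fixes g h :: "'a::finite \<Rightarrow> 'b::finite \<Rightarrow> complex"
  shows "(\<Sum>y\<in>UNIV. \<Sum>z\<in>UNIV. g y z * (if b = y then 1 else 0) * h y z) = (\<Sum>z\<in>UNIV. g b z * h b z)"
proof -
  have "(\<Sum>y\<in>UNIV. \<Sum>z\<in>UNIV. g y z * (if b = y then 1 else 0) * h y z) =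
        (\<Sum>y\<in>UNIV. if b = y then (\<Sum>z\<in>UNIV. g y z * h y z) else 0)"
    by (rule sum.cong) auto
  thus ?thesis by simp
qed

lemma delta3:
  fixes f :: "'a::finite \<Rightarrow> 'b::finite \<Rightarrow> 'c::finite \<Rightarrow> complex"
  shows "(\<Sum>x\<in>UNIV. \<Sum>y\<in>UNIV. \<Sum>z\<in>UNIV. (if i = x then 1 else 0) * f x y z) =
         (\<Sum>y\<in>UNIV. \<Sum>z\<in>UNIV. f i y z)"
proof -
  have "(\<Sum>x\<in>UNIV. \<Sum>y\<in>UNIV. \<Sum>z\<in>UNIV. (if i = x then 1 else 0) * f x y z) =
        (\<Sum>x\<in>UNIV. if i = x then (\<Sum>y\<in>UNIV. \<Sum>z\<in>UNIV. f x y z) else 0)"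
    by (rule sum.cong) auto
  thus ?thesis by simp
qed

theorem mainTheorem1:
  fixes U :: "complex^('s::finite \<times> 'u::finite)^('s \<times> 'u)"
    and chi :: "complex^'u"
    and \<rho>ss :: "complex^'s^'s"
  assumes "norm chi = 1"
    and "unitary U"
    and "primitive (transop U chi)"
    and "density_op \<rho>ss" and "transop U chi \<rho>ss = \<rho>ss"
  shows "\<exists>(\<psi>::complex^('s \<times> 's)) (V::complex^('s \<times> 'u)^('s \<times> 'u)).
           norm \<psi> = 1 \<and> ptrace2 (proj \<psi>) = \<rho>ss \<and> unitary V \<and>
           (V_ext V ** U_ext U) *v vtensor \<psi> chi = vtensor \<psi> chi"
proof -
  have psd: "psd \<rho>ss" using assms(4) by (simp add: density_op_def)
  obtain A :: "complex^'s^'s" where A: "A ** adj A = \<rho>ss" using purification[OF psd] by blast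
  have \<rho>e: "\<rho>ss $ i $ j = (\<Sum>k\<in>UNIV. A$i$k * cnj (A$j$k))" for i j
    using A[symmetric] by (simp add: matrix_matrix_mult_def adj_def)
  define \<psi> :: "complex^('s \<times> 's)" where "\<psi> = (\<chi> p. A $ fst p $ snd p)"
  have pt: "ptrace2 (proj \<psi>) = \<rho>ss"
    by (simp add: ptrace2_def proj_def \<psi>_def \<rho>e vec_eq_iff)
  have "cin \<psi> \<psi> = (\<Sum>i\<in>UNIV. \<Sum>k\<in>UNIV. cnj (A$i$k) * A$i$k)"
    by (simp add: cin_def sum_prod_UNIV \<psi>_def)
  also have "\<dots> = mtrace \<rho>ss" by (simp add: mtrace_def \<rho>e mult.commute)
  also have "\<dots> = 1" using assms(4) by (simp add: density_op_def)
  finally have "cin \<psi> \<psi> = 1" .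
  hence "(norm \<psi>)^2 = 1" using cin_self[of \<psi>] by (metis of_real_eq_1_iff)
  hence nrm: "norm \<psi> = 1" by (metis norm_ge_zero power2_eq_1_iff neg_0_le_iff_le zero_le_one order_antisym_conv neg_le_0_iff_le one_neq_neg_one)
  have cchi: "cin chi chi = 1" using assms(1) by (simp add: cin_self)
  define G where "G = (\<lambda>i b w. (\<Sum>p\<in>UNIV. U $ (i,w) $ p * A $ fst p $ b * chi $ snd p))"
  define \<phi> :: "'s \<Rightarrow> complex^('s \<times> 'u)" where "\<phi> i = (\<chi> q. G i (fst q) (snd q))" for i
  define cc :: "'s \<Rightarrow> complex^('s \<times> 'u)" where "cc i = (\<chi> q. A $ i $ fst q * chi $ snd q)" for i
  have gram: "cin (\<phi> i) (\<phi> j) = cin (cc i) (cc j)" for i j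
  proof -
    have "cin (\<phi> i) (\<phi> j) = (\<Sum>b\<in>UNIV. \<Sum>w\<in>UNIV. cnj (G i b w) * G j b w)"
      by (simp add: cin_def sum_prod_UNIV \<phi>_def)
    also have "\<dots> = transop U chi (A ** adj A) $ j $ i"
      unfolding G_def by (rule gram_lemma)
    also have "\<dots> = \<rho>ss $ j $ i" using A assms(5) by simp
    also have "\<dots> = (\<Sum>a\<in>UNIV. cnj (A$i$a) * A$j$a) * cin chi chi"
      using cchi by (simp add: \<rho>e mult.commute)
    also have "\<dots> = cin (cc i) (cc j)"
      by (simp add: cin_def sum_prod_UNIV cc_def sum_product mult_ac) (rule sum.swap)
    finally show ?thesis .
  qed
  obtain V where V: "unitary V" "\<And>i. V *v \<phi> i = cc i" using ext_fam[of \<phi> cc] gram by blast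
  have Ue: "(U_ext U *v vtensor \<psi> chi) $ ((i,b),w) = G i b w" for i b w
    by (simp add: matrix_vector_mult_def U_ext_def vtensor_def \<psi>_def G_def sum_prod_UNIV)
       (rule sum.cong[OF refl], subst delta2, simp add: mult_ac)
  have Ve: "(V_ext V *v y) $ ((i,a),u) = (V *v (\<chi> q. y $ ((i, fst q), snd q))) $ (a,u)"
    for y :: "complex^(('s \<times> 's) \<times> 'u)" and i a u
    by (simp add: matrix_vector_mult_def V_ext_def sum_prod_UNIV mult.assoc delta3)
  have "(V_ext V ** U_ext U) *v vtensor \<psi> chi = vtensor \<psi> chi"
  proof -
    have "((V_ext V ** U_ext U) *v vtensor \<psi> chi) $ ((i,a),u) = vtensor \<psi> chi $ ((i,a),u)" for i a u
    proof -
      have "(\<chi> q. (U_ext U *v vtensor \<psi> chi) $ ((i, fst q), snd q)) = \<phi> i"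
        by (simp add: Ue \<phi>_def)
      thus ?thesis
        by (simp add: matrix_vector_mul_assoc[symmetric] Ve V(2) cc_def vtensor_def \<psi>_def)
    qed
    thus ?thesis by (simp add: vec_eq_iff)
  qed
  thus ?thesis using nrm pt V(1) by blast
qed


end
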